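(* Let $\mathcal{P}$ be a grid polyomino with holes $\mathcal{H}_{ij}=[a_{ij},b_{ij}]$, $i\in[r]$, $j\in[s]$, and toric ideal $J_{\mathcal{P}}$. Let $f=f^+-f^-\in J_{\mathcal{P}}$ be a binomial, $V_+=\{v\in V(\mathcal{P}): x_v\mid f^+\}$, $V_-=\{v\in V(\mathcal{P}): x_v\mid f^-\}$. If $v\in V_+\cap\mathcal{L}_{i,j}$ for some $i\in[r]$, $j\in[s]$, then there exists $v'\in V_-\cap\mathcal{L}_{i,j}$.
   Context: A cell is $[a,a+(1,1)]$, $a\in\mathbb{N}^2$, with vertices $a,a+(1,0),a+(0,1),a+(1,1)$; a polyomino is a finite nonempty set of cells, any two joined by a sequence of cells in it with consecutive ones sharing an edge; $V(\mathcal{P})$ is the set of vertices of its cells; $S=\mathbb{K}[x_v\mid v\in V(\mathcal{P})]$, $\mathbb{K}$ a field. For $a=(a_1,a_2)\le b=(b_1,b_2)$ componentwise, $[a,b]=\{(p,q): a_1\le p\le b_1, a_2\le q\le b_2\}$. Grid polyomino: let $m,n\ge1$, $r,s\ge1$, and for $i\in[r]$, $j\in[s]$ let $a_{ij},b_{ij}\in\mathbb{N}^2$ with $1<(a_{ij})_1<(b_{ij})_1<m$, $1<(a_{ij})_2<(b_{ij})_2<n$, such that (1) for each $i$, $(a_{i\ell})_1=(a_{ik})_1$ and $(b_{i\ell})_1=(b_{ik})_1$ for all $\ell,k\in[s]$; (2) for each $j$, $(a_{\ell j})_2=(a_{kj})_2$ and $(b_{\ell j})_2=(b_{kj})_2$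 for all $\ell,k\in[r]$; (3) $(a_{i+1,j})_1=(b_{ij})_1+1$ for $i\in[r-1]$ and $(a_{i,j+1})_2=(b_{ij})_2+1$ for $j\in[s-1]$. The grid polyomino $\mathcal{P}$ is the set of cells of $[(1,1),(m,n)]$ not contained in any $\mathcal{H}_{ij}=[a_{ij},b_{ij}]$; the holes of $\mathcal{P}$ are the sets of cells of the $\mathcal{H}_{ij}$, with lower left corner $a_{ij}$. Toric ideal: set $\mathcal{F}_{i,j}=\{(x,y)\in V(\mathcal{P}): x\le (a_{ij})_1,\ y\le (a_{ij})_2\}$. A horizontal edge interval is a set $\{(t,y):p\le t\le q\}$ with each $\{(t,y),(t+1,y)\}$, $p\le t<q$, an edge of a cell of $\mathcal{P}$; maximal if not strictly contained in another; vertical analogously. Each $a\in V(\mathcal{P})$ lies in a unique maximal horizontal edge interval $H(a)$ and maximal vertical one $V(a)$. With variables $h_H,v_V$ for maximal edge intervals and $w_{i,j}$, define $\varphi(x_a)=h_{H(a)}v_{V(a)}\prod_{(i,j):a\in\mathcal{F}_{i,j}}w_{i,j}$; $J_{\mathcal{P}}=\ker\varphi$. Finally $\mathcal{L}_{i,j}=\mathcal{F}_{i,j}\setminus\bigcup\{\mathcal{F}_{k,h}: k\le i,\ h\le j,\ (k,h)\ne(i,j)\}$. *)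

theory Defs
  imports Main "HOL-Library.Poly_Mapping"
begin

(* Points of N^2 are pairs of naturals. A cell [c, c+(1,1)] is represented by its
   lower left corner c; a polyomino by the set of lower left corners of its cells. *)

definition cell_vertices :: "nat \<times> nat \<Rightarrow> (nat \<times> nat) set" where
  "cell_vertices c = {c, (fst c + 1, snd c), (fst c, snd c + 1), (fst c + 1, snd c + 1)}"

definition cell_edges :: "nat \<times> nat \<Rightarrow> (nat \<times> nat) set set" where
  "cell_edges c = {{c, (fst c + 1, snd c)}, {(fst c, snd c + 1), (fst c + 1, snd c + 1)},
                   {c, (fst c, snd c + 1)}, {(fst c + 1, snd c), (fst c + 1, snd c + 1)}}"

definition poly_vertices :: "(nat \<times> nat) set \<Rightarrow> (nat \<times> nat) set" where
  "poly_vertices P = (\<Union>c\<in>P. cell_vertices c)"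

definition is_edge_of :: "(nat \<times> nat) set \<Rightarrow> (nat \<times> nat) set \<Rightarrow> bool" where
  "is_edge_of P e \<longleftrightarrow> (\<exists>c\<in>P. e \<in> cell_edges c)"

definition horiz_edge_interval :: "(nat \<times> nat) set \<Rightarrow> (nat \<times> nat) set \<Rightarrow> bool" where
  "horiz_edge_interval P I \<longleftrightarrow> (\<exists>p q y. p \<le> q \<and> I = {(t, y) | t. p \<le> t \<and> t \<le> q} \<and>
      (\<forall>t. p \<le> t \<and> t < q \<longrightarrow> is_edge_of P {(t, y), (t + 1, y)}))"

definition vert_edge_interval :: "(nat \<times> nat) set \<Rightarrow> (nat \<times> nat) set \<Rightarrow> bool" where
  "vert_edge_interval P I \<longleftrightarrow> (\<exists>p q x. p \<le> q \<and> I = {(x, t) | t. p \<le> t \<and> t \<le> q} \<and>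
      (\<forall>t. p \<le> t \<and> t < q \<longrightarrow> is_edge_of P {(x, t), (x, t + 1)}))"

definition max_horiz_edge_interval :: "(nat \<times> nat) set \<Rightarrow> (nat \<times> nat) set \<Rightarrow> bool" where
  "max_horiz_edge_interval P I \<longleftrightarrow> horiz_edge_interval P I \<and>
      \<not> (\<exists>J. horiz_edge_interval P J \<and> I \<subset> J)"

definition max_vert_edge_interval :: "(nat \<times> nat) set \<Rightarrow> (nat \<times> nat) set \<Rightarrow> bool" where
  "max_vert_edge_interval P I \<longleftrightarrow> vert_edge_interval P I \<and>
      \<not> (\<exists>J. vert_edge_interval P J \<and> I \<subset> J)"

definition Hint :: "(nat \<times> nat) set \<Rightarrow> nat \<times> nat \<Rightarrow> (nat \<times> nat) set" where
  "Hint P v = (THE I. max_horiz_edge_interval P I \<and> v \<in> I)"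

definition Vint :: "(nat \<times> nat) set \<Rightarrow> nat \<times> nat \<Rightarrow> (nat \<times> nat) set" where
  "Vint P v = (THE I. max_vert_edge_interval P I \<and> v \<in> I)"

definition cell_in :: "nat \<times> nat \<Rightarrow> nat \<times> nat \<Rightarrow> nat \<times> nat \<Rightarrow> bool" where
  "cell_in c p q \<longleftrightarrow> fst p \<le> fst c \<and> fst c + 1 \<le> fst q \<and> snd p \<le> snd c \<and> snd c + 1 \<le> snd q"

(* grid polyomino data: m n r s, holes [A i j, B i j] for i in [r], j in [s] *)
definition grid_data :: "nat \<Rightarrow> nat \<Rightarrow> nat \<Rightarrow> nat \<Rightarrow> (nat \<Rightarrow> nat \<Rightarrow> nat \<times> nat)
    \<Rightarrow> (nat \<Rightarrow> nat \<Rightarrow> nat \<times> nat) \<Rightarrow> bool" where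
  "grid_data m n r s A B \<longleftrightarrow> 1 \<le> m \<and> 1 \<le> n \<and> 1 \<le> r \<and> 1 \<le> s \<and>
     (\<forall>i\<in>{1..r}. \<forall>j\<in>{1..s}. 1 < fst (A i j) \<and> fst (A i j) < fst (B i j) \<and> fst (B i j) < m \<and>
                              1 < snd (A i j) \<and> snd (A i j) < snd (B i j) \<and> snd (B i j) < n) \<and>
     (\<forall>i\<in>{1..r}. \<forall>l\<in>{1..s}. \<forall>k\<in>{1..s}. fst (A i l) = fst (A i k) \<and> fst (B i l) = fst (B i k)) \<and>
     (\<forall>j\<in>{1..s}. \<forall>l\<in>{1..r}. \<forall>k\<in>{1..r}. snd (A l j) = snd (A k j) \<and> snd (B l j) = snd (B k j)) \<and>
     (\<forall>i\<in>{1..<r}. \<forall>j\<in>{1..s}. fst (A (i + 1) j) = fst (B i j) + 1) \<and>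
     (\<forall>i\<in>{1..r}. \<forall>j\<in>{1..<s}. snd (A i (j + 1)) = snd (B i j) + 1)"

definition grid_polyomino :: "nat \<Rightarrow> nat \<Rightarrow> nat \<Rightarrow> nat \<Rightarrow> (nat \<Rightarrow> nat \<Rightarrow> nat \<times> nat)
    \<Rightarrow> (nat \<Rightarrow> nat \<Rightarrow> nat \<times> nat) \<Rightarrow> (nat \<times> nat) set" where
  "grid_polyomino m n r s A B = {c. cell_in c (1, 1) (m, n) \<and>
      \<not> (\<exists>i\<in>{1..r}. \<exists>j\<in>{1..s}. cell_in c (A i j) (B i j))}"

definition Fset :: "(nat \<times> nat) set \<Rightarrow> (nat \<Rightarrow> nat \<Rightarrow> nat \<times> nat) \<Rightarrow> nat \<Rightarrow> nat \<Rightarrow> (nat \<times> nat) set" where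
  "Fset P A i j = {v \<in> poly_vertices P. fst v \<le> fst (A i j) \<and> snd v \<le> snd (A i j)}"

definition Lset :: "(nat \<times> nat) set \<Rightarrow> (nat \<Rightarrow> nat \<Rightarrow> nat \<times> nat) \<Rightarrow> nat \<Rightarrow> nat \<Rightarrow> (nat \<times> nat) set" where
  "Lset P A i j = Fset P A i j -
     (\<Union>{Fset P A k h | k h. k \<in> {1..i} \<and> h \<in> {1..j} \<and> (k, h) \<noteq> (i, j)})"

(* Polynomials: K[x_v] as (monomial exponent \<Rightarrow>0 coefficient) *)
type_synonym 'k vpoly = "((nat \<times> nat) \<Rightarrow>\<^sub>0 nat) \<Rightarrow>\<^sub>0 'k"

(* variables of the target ring K[h_H, v_V, w_ij] *)
datatype tvar = HVar "(nat \<times> nat) set" | VVar "(nat \<times> nat) set" | WVar nat nat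

type_synonym 'k tpoly = "(tvar \<Rightarrow>\<^sub>0 nat) \<Rightarrow>\<^sub>0 'k"

definition var :: "'v \<Rightarrow> ('v \<Rightarrow>\<^sub>0 nat) \<Rightarrow>\<^sub>0 'k::comm_ring_1" where
  "var x = Poly_Mapping.single (Poly_Mapping.single x 1) 1"

definition monom :: "('v \<Rightarrow>\<^sub>0 nat) \<Rightarrow> ('v \<Rightarrow>\<^sub>0 nat) \<Rightarrow>\<^sub>0 'k::comm_ring_1" where
  "monom u = Poly_Mapping.single u 1"

definition const :: "'k \<Rightarrow> ('v \<Rightarrow>\<^sub>0 nat) \<Rightarrow>\<^sub>0 'k::comm_ring_1" where
  "const c = Poly_Mapping.single 0 c"

(* the polynomial ring S = K[x_v | v \<in> V(P)] as a subset *)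
definition in_S :: "(nat \<times> nat) set \<Rightarrow> 'k::comm_ring_1 vpoly \<Rightarrow> bool" where
  "in_S V f \<longleftrightarrow> (\<forall>\<alpha>\<in>Poly_Mapping.keys f. Poly_Mapping.keys \<alpha> \<subseteq> V)"

definition phi_var :: "nat \<Rightarrow> nat \<Rightarrow> (nat \<times> nat) set \<Rightarrow> (nat \<Rightarrow> nat \<Rightarrow> nat \<times> nat)
     \<Rightarrow> nat \<times> nat \<Rightarrow> 'k::comm_ring_1 tpoly" where
  "phi_var r s P A v = var (HVar (Hint P v)) * var (VVar (Vint P v)) *
      (\<Prod>ij\<in>{ij. fst ij \<in> {1..r} \<and> snd ij \<in> {1..s} \<and> v \<in> Fset P A (fst ij) (snd ij)}.
          var (WVar (fst ij) (snd ij)))"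

definition phi :: "nat \<Rightarrow> nat \<Rightarrow> (nat \<times> nat) set \<Rightarrow> (nat \<Rightarrow> nat \<Rightarrow> nat \<times> nat)
     \<Rightarrow> 'k::comm_ring_1 vpoly \<Rightarrow> 'k tpoly" where
  "phi r s P A f = (\<Sum>\<alpha>\<in>Poly_Mapping.keys f. const (Poly_Mapping.lookup f \<alpha>) *
        (\<Prod>v\<in>Poly_Mapping.keys \<alpha>. phi_var r s P A v ^ Poly_Mapping.lookup \<alpha> v))"

definition toric_ideal :: "nat \<Rightarrow> nat \<Rightarrow> (nat \<times> nat) set \<Rightarrow> (nat \<Rightarrow> nat \<Rightarrow> nat \<times> nat)
     \<Rightarrow> 'k::comm_ring_1 vpoly set" where
  "toric_ideal r s P A = {f. in_S (poly_vertices P) f \<and> phi r s P A f = 0}"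

end

theory Submission
  imports Defs
begin


lemma single_pow_ex:
  "\<exists>E. (Poly_Mapping.single a (1::'k::comm_ring_1)) ^ n = Poly_Mapping.single E 1 \<and>
       (\<forall>t. Poly_Mapping.lookup E t = n * Poly_Mapping.lookup a t)"
proof (induction n)
  case 0 show ?case by (rule exI[of _ 0]) simp
next
  case (Suc n)
  then obtain E where E: "Poly_Mapping.single a (1::'k) ^ n = Poly_Mapping.single E 1"
    "\<forall>t. Poly_Mapping.lookup E t = n * Poly_Mapping.lookup a t" by blast
  show ?case
    by (rule exI[of _ "a + E"]) (simp add: E mult_single lookup_add)
qed

lemma prod_single_pow_ex:
  assumes "finite S"
  shows "\<exists>E. (\<Prod>v\<in>S. (Poly_Mapping.single (a v) (1::'k::comm_ring_1)) ^ n v) = Poly_Mapping.single E 1 \<and>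
       (\<forall>t. Poly_Mapping.lookup E t = (\<Sum>v\<in>S. n v * Poly_Mapping.lookup (a v) t))"
  using assms
proof (induction S rule: finite_induct)
  case empty show ?case by (rule exI[of _ 0]) simp
next
  case (insert x S)
  then obtain E where E: "(\<Prod>v\<in>S. (Poly_Mapping.single (a v) (1::'k)) ^ n v) = Poly_Mapping.single E 1"
    "\<forall>t. Poly_Mapping.lookup E t = (\<Sum>v\<in>S. n v * Poly_Mapping.lookup (a v) t)" by blast
  obtain D where D: "(Poly_Mapping.single (a x) (1::'k)) ^ n x = Poly_Mapping.single D 1"
    "\<forall>t. Poly_Mapping.lookup D t = n x * Poly_Mapping.lookup (a x) t"
    using single_pow_ex by blast
  show ?case
    by (rule exI[of _ "D + E"]) (simp add: insert E D mult_single lookup_add)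
qed

lemma phi_var_ex:
  "\<exists>e. (phi_var r s P A v :: 'k::comm_ring_1 tpoly) = Poly_Mapping.single e 1 \<and>
     (\<forall>k h. Poly_Mapping.lookup e (WVar k h) =
        (if k \<in> {1..r} \<and> h \<in> {1..s} \<and> v \<in> Fset P A k h then 1 else 0))"
proof -
  let ?S = "{ij. fst ij \<in> {1..r} \<and> snd ij \<in> {1..s} \<and> v \<in> Fset P A (fst ij) (snd ij)}"
  have fin: "finite ?S"
    by (rule finite_subset[of _ "{1..r} \<times> {1..s}"]) auto
  obtain E where E: "(\<Prod>ij\<in>?S. (Poly_Mapping.single (Poly_Mapping.single (WVar (fst ij) (snd ij)) (1::nat)) (1::'k)) ^ 1) = Poly_Mapping.single E 1"
    "\<forall>t. Poly_Mapping.lookup E t = (\<Sum>ij\<in>?S. 1 * Poly_Mapping.lookup (Poly_Mapping.single (WVar (fst ij) (snd ij)) (1::nat)) t)"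
    using prod_single_pow_ex[OF fin, of "\<lambda>ij. Poly_Mapping.single (WVar (fst ij) (snd ij)) (1::nat)" "\<lambda>_. 1"]
    by blast
  have L: "Poly_Mapping.lookup E (WVar k h) = (if k \<in> {1..r} \<and> h \<in> {1..s} \<and> v \<in> Fset P A k h then 1 else 0)" for k h
  proof -
    have "Poly_Mapping.lookup E (WVar k h) = (\<Sum>ij\<in>?S. if ij = (k,h) then 1 else 0)"
      using E(2) by (auto simp: lookup_single intro!: sum.cong)
    also have "\<dots> = (if (k,h) \<in> ?S then 1 else 0)"
      using fin by (simp add: sum.delta')
    finally show ?thesis by simp
  qed
  have "(phi_var r s P A v :: 'k tpoly) = Poly_Mapping.single
      (Poly_Mapping.single (HVar (Hint P v)) 1 + Poly_Mapping.single (VVar (Vint P v)) 1 + E) 1"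
    unfolding phi_var_def var_def using E(1) by (simp add: mult_single)
  then show ?thesis
    by (intro exI[of _ "Poly_Mapping.single (HVar (Hint P v)) 1 + Poly_Mapping.single (VVar (Vint P v)) 1 + E"])
       (simp add: lookup_add L lookup_single)
qed

definition cnt :: "((nat \<times> nat) \<Rightarrow>\<^sub>0 nat) \<Rightarrow> (nat \<times> nat) set \<Rightarrow> nat" where
  "cnt u S = (\<Sum>v\<in>Poly_Mapping.keys u. if v \<in> S then Poly_Mapping.lookup u v else 0)"

lemma phi_mon_ex:
  "\<exists>E. (\<Prod>v\<in>Poly_Mapping.keys u. (phi_var r s P A v :: 'k::comm_ring_1 tpoly) ^ Poly_Mapping.lookup u v)
       = Poly_Mapping.single E 1 \<and>
     (\<forall>k\<in>{1..r}. \<forall>h\<in>{1..s}. Poly_Mapping.lookup E (WVar k h) = cnt u (Fset P A k h))"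
proof -
  define ee where "ee v = (SOME e. (phi_var r s P A v :: 'k tpoly) = Poly_Mapping.single e 1 \<and>
     (\<forall>k h. Poly_Mapping.lookup e (WVar k h) =
        (if k \<in> {1..r} \<and> h \<in> {1..s} \<and> v \<in> Fset P A k h then 1 else 0)))" for v
  have ee: "(phi_var r s P A v :: 'k tpoly) = Poly_Mapping.single (ee v) 1 \<and>
     (\<forall>k h. Poly_Mapping.lookup (ee v) (WVar k h) =
        (if k \<in> {1..r} \<and> h \<in> {1..s} \<and> v \<in> Fset P A k h then 1 else 0))" for v
    unfolding ee_def by (rule someI_ex, rule phi_var_ex)
  obtain E where E: "(\<Prod>v\<in>Poly_Mapping.keys u. (Poly_Mapping.single (ee v) (1::'k)) ^ Poly_Mapping.lookup u v) = Poly_Mapping.single E 1"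
       "\<forall>t. Poly_Mapping.lookup E t = (\<Sum>v\<in>Poly_Mapping.keys u. Poly_Mapping.lookup u v * Poly_Mapping.lookup (ee v) t)"
    using prod_single_pow_ex[of "Poly_Mapping.keys u" ee "Poly_Mapping.lookup u"] by auto
  have "(\<Prod>v\<in>Poly_Mapping.keys u. (phi_var r s P A v :: 'k::comm_ring_1 tpoly) ^ Poly_Mapping.lookup u v)
       = Poly_Mapping.single E 1" using E(1) ee by simp
  moreover have "\<forall>k\<in>{1..r}. \<forall>h\<in>{1..s}. Poly_Mapping.lookup E (WVar k h) = cnt u (Fset P A k h)"
    using E(2) ee unfolding cnt_def by (auto intro!: sum.cong)
  ultimately show ?thesis by blast
qed

lemma phi_monom:
  "\<exists>E. (phi r s P A (monom u :: 'k::field vpoly)) = Poly_Mapping.single E 1 \<and>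
     (\<forall>k\<in>{1..r}. \<forall>h\<in>{1..s}. Poly_Mapping.lookup E (WVar k h) = cnt u (Fset P A k h))"
proof -
  obtain E where E: "(\<Prod>v\<in>Poly_Mapping.keys u. (phi_var r s P A v :: 'k tpoly) ^ Poly_Mapping.lookup u v)
       = Poly_Mapping.single E 1"
     "\<forall>k\<in>{1..r}. \<forall>h\<in>{1..s}. Poly_Mapping.lookup E (WVar k h) = cnt u (Fset P A k h)"
    using phi_mon_ex by blast
  have "phi r s P A (monom u :: 'k vpoly) = Poly_Mapping.single E 1"
    unfolding phi_def monom_def const_def using E(1) by (simp add: mult_single)
  with E(2) show ?thesis by blast
qed

lemma phi_binom:
  assumes "u \<noteq> w" "phi r s P A (monom u - monom w :: 'k::field vpoly) = 0"
    "k \<in> {1..r}" "h \<in> {1..s}"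
  shows "cnt u (Fset P A k h) = cnt w (Fset P A k h)"
proof -
  obtain E where E: "(\<Prod>v\<in>Poly_Mapping.keys u. (phi_var r s P A v :: 'k tpoly) ^ Poly_Mapping.lookup u v)
       = Poly_Mapping.single E 1"
     "\<forall>k\<in>{1..r}. \<forall>h\<in>{1..s}. Poly_Mapping.lookup E (WVar k h) = cnt u (Fset P A k h)"
    using phi_mon_ex by blast
  obtain F where F: "(\<Prod>v\<in>Poly_Mapping.keys w. (phi_var r s P A v :: 'k tpoly) ^ Poly_Mapping.lookup w v)
       = Poly_Mapping.single F 1"
     "\<forall>k\<in>{1..r}. \<forall>h\<in>{1..s}. Poly_Mapping.lookup F (WVar k h) = cnt w (Fset P A k h)"
    using phi_mon_ex by blast
  let ?f = "monom u - monom w :: 'k vpoly"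
  have keys: "Poly_Mapping.keys ?f = {u, w}"
    using assms(1) by (auto simp: monom_def in_keys_iff lookup_minus lookup_single)
  have lu: "Poly_Mapping.lookup ?f u = 1" and lw: "Poly_Mapping.lookup ?f w = -1"
    using assms(1) by (auto simp: monom_def lookup_minus lookup_single)
  have "phi r s P A ?f = const 1 * Poly_Mapping.single E 1 + const (-1) * Poly_Mapping.single F 1"
    unfolding phi_def keys using assms(1) lu lw E(1) F(1) by simp
  also have "\<dots> = Poly_Mapping.single E 1 - Poly_Mapping.single F (1::'k)"
    by (simp add: const_def mult_single single_uminus)
  finally have "Poly_Mapping.single E 1 = Poly_Mapping.single F (1::'k)" using assms(2) by simp
  then have "E = F" by (metis lookup_single_eq lookup_single_not_eq one_neq_zero)
  then show ?thesis using E(2) F(2) assms(3,4) by auto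
qed


lemma dvd_var_keys:
  assumes "(var v :: 'k::field vpoly) dvd monom u"
  shows "v \<in> Poly_Mapping.keys u"
proof -
  obtain g where g: "monom u = (var v :: 'k vpoly) * g" using assms by (auto elim: dvdE)
  have "u \<in> Poly_Mapping.keys (monom u :: 'k vpoly)" by (simp add: monom_def)
  then have "u \<in> Poly_Mapping.keys ((var v :: 'k vpoly) * g)" using g by simp
  then obtain a b where ab: "u = a + b" "a \<in> Poly_Mapping.keys (var v :: 'k vpoly)"
    using keys_mult by blast
  then have "a = Poly_Mapping.single v 1" by (simp add: var_def)
  then have "Poly_Mapping.lookup u v \<ge> 1" using ab by (simp add: lookup_add)
  then show ?thesis by (simp add: in_keys_iff)
qed

lemma keys_dvd_var:
  assumes "v \<in> Poly_Mapping.keys w"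
  shows "(var v :: 'k::field vpoly) dvd monom w"
proof -
  have "Poly_Mapping.single v 1 + (w - Poly_Mapping.single v 1) = w"
    using assms by (intro poly_mapping_eqI) (auto simp: lookup_add lookup_minus lookup_single in_keys_iff when_def)
  then have "monom w = (var v :: 'k vpoly) * monom (w - Poly_Mapping.single v 1)"
    by (simp add: monom_def var_def mult_single)
  then show ?thesis by simp
qed

lemma cnt_incl_excl:
  assumes "L = F - (F1 \<union> F2)" "F1 \<subseteq> F" "F2 \<subseteq> F" "F3 = F1 \<inter> F2"
  shows "int (cnt u L) = int (cnt u F) - int (cnt u F1) - int (cnt u F2) + int (cnt u F3)"
proof -
  have "int (cnt u L) = (\<Sum>v\<in>Poly_Mapping.keys u.
      int (if v \<in> F then Poly_Mapping.lookup u v else 0) - int (if v \<in> F1 then Poly_Mapping.lookup u v else 0)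
      - int (if v \<in> F2 then Poly_Mapping.lookup u v else 0) + int (if v \<in> F3 then Poly_Mapping.lookup u v else 0))"
    unfolding cnt_def of_nat_sum by (rule sum.cong) (use assms in auto)
  then show ?thesis by (simp add: sum.distrib sum_subtractf cnt_def of_nat_sum)
qed

lemma cnt_pos:
  assumes "cnt u L > 0" shows "\<exists>x\<in>Poly_Mapping.keys u. x \<in> L"
proof (rule ccontr)
  assume "\<not> ?thesis"
  then have "cnt u L = 0" unfolding cnt_def by (intro sum.neutral) auto
  with assms show False by simp
qed

lemma cnt_ge:
  assumes "v \<in> Poly_Mapping.keys u" "v \<in> L" shows "cnt u L > 0"
proof -
  have "(if v \<in> L then Poly_Mapping.lookup u v else 0) \<le> cnt u L"
    unfolding cnt_def by (rule member_le_sum) (use assms in auto)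
  then show ?thesis using assms by (simp add: in_keys_iff)
qed



lemma gd_AB: "grid_data m n r s A B \<Longrightarrow> i \<in> {1..r} \<Longrightarrow> j \<in> {1..s} \<Longrightarrow>
   fst (A i j) < fst (B i j) \<and> snd (A i j) < snd (B i j)"
  unfolding grid_data_def by blast
lemma gd_row: "grid_data m n r s A B \<Longrightarrow> i \<in> {1..r} \<Longrightarrow> l \<in> {1..s} \<Longrightarrow> k \<in> {1..s} \<Longrightarrow>
   fst (A i l) = fst (A i k)"
  unfolding grid_data_def by blast
lemma gd_col: "grid_data m n r s A B \<Longrightarrow> j \<in> {1..s} \<Longrightarrow> l \<in> {1..r} \<Longrightarrow> k \<in> {1..r} \<Longrightarrow>
   snd (A l j) = snd (A k j)"
  unfolding grid_data_def by blast
lemma gd_stepx: "grid_data m n r s A B \<Longrightarrow> i \<in> {1..<r} \<Longrightarrow> j \<in> {1..s} \<Longrightarrow>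
   fst (A (i + 1) j) = fst (B i j) + 1"
  unfolding grid_data_def by blast
lemma gd_stepy: "grid_data m n r s A B \<Longrightarrow> i \<in> {1..r} \<Longrightarrow> j \<in> {1..<s} \<Longrightarrow>
   snd (A i (j + 1)) = snd (B i j) + 1"
  unfolding grid_data_def by blast

lemma fst_mono_step:
  assumes g: "grid_data m n r s A B" and "k \<in> {1..r}" "k + d \<in> {1..r}" "j \<in> {1..s}"
  shows "fst (A k j) + d \<le> fst (A (k + d) j)"
  using assms(2-)
proof (induction d)
  case 0 then show ?case by simp
next
  case (Suc d)
  have k1: "k + d \<in> {1..<r}" using Suc.prems by auto
  have "fst (A (k + d + 1) j) = fst (B (k + d) j) + 1" using gd_stepx[OF g k1] Suc.prems by blast
  moreover have "fst (A (k + d) j) < fst (B (k + d) j)" using gd_AB[OF g, of "k+d" j] k1 Suc.prems by auto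
  moreover have "fst (A k j) + d \<le> fst (A (k + d) j)" using Suc k1 by auto
  ultimately show ?case by simp
qed

lemma snd_mono_step:
  assumes g: "grid_data m n r s A B" and "k \<in> {1..s}" "k + d \<in> {1..s}" "i \<in> {1..r}"
  shows "snd (A i k) + d \<le> snd (A i (k + d))"
  using assms(2-)
proof (induction d)
  case 0 then show ?case by simp
next
  case (Suc d)
  have k1: "k + d \<in> {1..<s}" using Suc.prems by auto
  have "snd (A i (k + d + 1)) = snd (B i (k + d)) + 1" using gd_stepy[OF g _ k1] Suc.prems by blast
  moreover have "snd (A i (k + d)) < snd (B i (k + d))" using gd_AB[OF g, of i "k+d"] k1 Suc.prems by auto
  moreover have "snd (A i k) + d \<le> snd (A i (k + d))" using Suc k1 by auto
  ultimately show ?case by simp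
qed

lemma fst_mono:
  assumes g: "grid_data m n r s A B" and "k \<in> {1..r}" "i \<in> {1..r}" "h \<in> {1..s}" "j \<in> {1..s}" "k \<le> i"
  shows "fst (A k h) + (i - k) \<le> fst (A i j)"
proof -
  have "fst (A k h) = fst (A k j)" using gd_row[OF g] assms by blast
  moreover have "fst (A k j) + (i - k) \<le> fst (A (k + (i - k)) j)"
    by (rule fst_mono_step[OF g]) (use assms in auto)
  ultimately show ?thesis using assms by simp
qed

lemma snd_mono:
  assumes g: "grid_data m n r s A B" and "k \<in> {1..r}" "i \<in> {1..r}" "h \<in> {1..s}" "j \<in> {1..s}" "h \<le> j"
  shows "snd (A k h) + (j - h) \<le> snd (A i j)"
proof -
  have "snd (A k h) = snd (A i h)" using gd_col[OF g] assms by blast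
  moreover have "snd (A i h) + (j - h) \<le> snd (A i (h + (j - h)))"
    by (rule snd_mono_step[OF g]) (use assms in auto)
  ultimately show ?thesis using assms by simp
qed

lemma Fset_mono:
  assumes g: "grid_data m n r s A B" and "k \<in> {1..r}" "i \<in> {1..r}" "h \<in> {1..s}" "j \<in> {1..s}" "k \<le> i" "h \<le> j"
  shows "Fset P A k h \<subseteq> Fset P A i j"
  using fst_mono[OF assms(1-6)] snd_mono[OF g assms(2-5) assms(7)] unfolding Fset_def by auto

lemma Fset_inter:
  assumes g: "grid_data m n r s A B" and "i \<in> {2..r}" "j \<in> {2..s}"
  shows "Fset P A (i-1) j \<inter> Fset P A i (j-1) = Fset P A (i-1) (j-1)"
proof -
  have r: "i-1 \<in> {1..r}" "i \<in> {1..r}" "j \<in> {1..s}" "j-1 \<in> {1..s}" using assms by auto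
  have a: "fst (A (i-1) j) = fst (A (i-1) (j-1))" by (rule gd_row[OF g r(1,3,4)])
  have b: "snd (A i (j-1)) = snd (A (i-1) (j-1))" by (rule gd_col[OF g r(4,2,1)])
  have c: "fst (A (i-1) (j-1)) + 1 \<le> fst (A i (j-1))"
    using fst_mono[OF g r(1,2,4,4)] assms by auto
  have d: "snd (A (i-1) (j-1)) + 1 \<le> snd (A (i-1) j)"
    using snd_mono[OF g r(1,1,4,3)] assms by auto
  show ?thesis unfolding Fset_def using a b c d by auto
qed

lemma Lset_char:
  assumes g: "grid_data m n r s A B" and ij: "i \<in> {1..r}" "j \<in> {1..s}"
  shows "Lset P A i j = Fset P A i j - ((if 1 < i then Fset P A (i-1) j else {}) \<union> (if 1 < j then Fset P A i (j-1) else {}))"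
proof -
  have "(\<Union>{Fset P A k h | k h. k \<in> {1..i} \<and> h \<in> {1..j} \<and> (k, h) \<noteq> (i, j)})
     = (if 1 < i then Fset P A (i-1) j else {}) \<union> (if 1 < j then Fset P A i (j-1) else {})"
  proof (rule antisym)
    show "(\<Union>{Fset P A k h | k h. k \<in> {1..i} \<and> h \<in> {1..j} \<and> (k, h) \<noteq> (i, j)})
     \<subseteq> (if 1 < i then Fset P A (i-1) j else {}) \<union> (if 1 < j then Fset P A i (j-1) else {})"
    proof (rule Union_least)
      fix X assume "X \<in> {Fset P A k h | k h. k \<in> {1..i} \<and> h \<in> {1..j} \<and> (k, h) \<noteq> (i, j)}"
      then obtain k h where kh: "X = Fset P A k h" "k \<in> {1..i}" "h \<in> {1..j}" "(k, h) \<noteq> (i, j)" by blast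
      show "X \<subseteq> (if 1 < i then Fset P A (i-1) j else {}) \<union> (if 1 < j then Fset P A i (j-1) else {})"
      proof (cases "k < i")
        case True
        have "Fset P A k h \<subseteq> Fset P A (i-1) j" by (rule Fset_mono[OF g]) (use kh ij True in auto)
        then have "X \<subseteq> Fset P A (i-1) j" using kh by simp
        then show ?thesis using True kh by auto
      next
        case False
        then have "k = i" "h < j" using kh by auto
        then have "Fset P A k h \<subseteq> Fset P A i (j-1)" by (intro Fset_mono[OF g]) (use kh ij in auto)
        then have "X \<subseteq> Fset P A i (j-1)" using kh by simp
        then show ?thesis using \<open>h < j\<close> kh by auto
      qed
    qed
  next
    have 1: "1 < i \<Longrightarrow> Fset P A (i-1) j \<in> {Fset P A k h | k h. k \<in> {1..i} \<and> h \<in> {1..j} \<and> (k, h) \<noteq> (i, j)}"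
      using ij by (intro CollectI exI[of _ "i-1"] exI[of _ j]) auto
    have 2: "1 < j \<Longrightarrow> Fset P A i (j-1) \<in> {Fset P A k h | k h. k \<in> {1..i} \<and> h \<in> {1..j} \<and> (k, h) \<noteq> (i, j)}"
      using ij by (intro CollectI exI[of _ i] exI[of _ "j-1"]) auto
    show "(if 1 < i then Fset P A (i-1) j else {}) \<union> (if 1 < j then Fset P A i (j-1) else {})
      \<subseteq> (\<Union>{Fset P A k h | k h. k \<in> {1..i} \<and> h \<in> {1..j} \<and> (k, h) \<noteq> (i, j)})"
      using 1 2 by auto
  qed
  then show ?thesis unfolding Lset_def by simp
qed

theorem lemma4p3:
  fixes m n r s :: nat
    and A B :: "nat \<Rightarrow> nat \<Rightarrow> nat \<times> nat"
    and fp fm :: "'k::field vpoly"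
    and i j :: nat
    and v :: "nat \<times> nat"
  defines "P \<equiv> grid_polyomino m n r s A B"
  assumes grid: "grid_data m n r s A B"
    and binom: "\<exists>u w. fp = monom u \<and> fm = monom w"
    and inJ: "fp - fm \<in> toric_ideal r s P A"
    and ij: "i \<in> {1..r}" "j \<in> {1..s}"
    and vplus: "v \<in> poly_vertices P" "var v dvd fp"
    and vL: "v \<in> Lset P A i j"
  shows "\<exists>v'. v' \<in> poly_vertices P \<and> var v' dvd fm \<and> v' \<in> Lset P A i j"
proof -
  obtain u w where uw: "fp = monom u" "fm = monom w" using binom by blast
  show ?thesis
  proof (cases "u = w")
    case True
    then have "fm = fp" using uw by simp
    then have "var v dvd fm" using vplus(2) by (simp only:)
    then show ?thesis using vplus(1) vL by (intro exI[of _ v] conjI)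
  next
    case False
    have inS: "in_S (poly_vertices P) (monom u - monom w :: 'k vpoly)"
      and ph: "phi r s P A (monom u - monom w :: 'k vpoly) = 0"
      using inJ uw unfolding toric_ideal_def by auto
    have "w \<in> Poly_Mapping.keys (monom u - monom w :: 'k vpoly)"
      using False by (auto simp: monom_def in_keys_iff lookup_minus lookup_single)
    then have wV: "Poly_Mapping.keys w \<subseteq> poly_vertices P" using inS unfolding in_S_def by blast
    have vu: "v \<in> Poly_Mapping.keys u" using vplus(2) uw by (simp add: dvd_var_keys)
    define F1 where "F1 = (if 1 < i then Fset P A (i-1) j else {})"
    define F2 where "F2 = (if 1 < j then Fset P A i (j-1) else {})"
    define F3 where "F3 = (if 1 < i \<and> 1 < j then Fset P A (i-1) (j-1) else {})"
    have L: "Lset P A i j = Fset P A i j - (F1 \<union> F2)"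
      unfolding F1_def F2_def by (rule Lset_char[OF grid ij])
    have s1: "F1 \<subseteq> Fset P A i j"
    proof (cases "1 < i")
      case True
      then have "Fset P A (i-1) j \<subseteq> Fset P A i j" by (intro Fset_mono[OF grid]) (use ij in auto)
      then show ?thesis using True unfolding F1_def by simp
    qed (simp add: F1_def cnt_def)
    have s2: "F2 \<subseteq> Fset P A i j"
    proof (cases "1 < j")
      case True
      then have "Fset P A i (j-1) \<subseteq> Fset P A i j" by (intro Fset_mono[OF grid]) (use ij in auto)
      then show ?thesis using True unfolding F2_def by simp
    qed (simp add: F2_def cnt_def)
    have s3: "F3 = F1 \<inter> F2"
    proof (cases "1 < i \<and> 1 < j")
      case True
      then have "i \<in> {2..r}" "j \<in> {2..s}" using ij by auto
      from Fset_inter[OF grid this] True show ?thesis unfolding F1_def F2_def F3_def by simp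
    qed (auto simp: F1_def F2_def F3_def)
    have eqF: "cnt u (Fset P A k h) = cnt w (Fset P A k h)" if "k \<in> {1..r}" "h \<in> {1..s}" for k h
      by (rule phi_binom[OF False ph that])
    have e0: "cnt u (Fset P A i j) = cnt w (Fset P A i j)" by (rule eqF[OF ij])
    have e1: "cnt u F1 = cnt w F1"
    proof (cases "1 < i")
      case True
      then have "i - 1 \<in> {1..r}" using ij by auto
      from eqF[OF this ij(2)] True show ?thesis unfolding F1_def by simp
    qed (simp add: F1_def cnt_def)
    have e2: "cnt u F2 = cnt w F2"
    proof (cases "1 < j")
      case True
      then have "j - 1 \<in> {1..s}" using ij by auto
      from eqF[OF ij(1) this] True show ?thesis unfolding F2_def by simp
    qed (simp add: F2_def cnt_def)
    have e3: "cnt u F3 = cnt w F3"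
    proof (cases "1 < i \<and> 1 < j")
      case True
      then have "i - 1 \<in> {1..r}" "j - 1 \<in> {1..s}" using ij by auto
      from eqF[OF this] True show ?thesis unfolding F3_def by simp
    next
      case False then have "F3 = {}" unfolding F3_def by auto
      then show ?thesis by (simp add: cnt_def)
    qed
    have "int (cnt w (Lset P A i j)) = int (cnt u (Lset P A i j))"
      using cnt_incl_excl[OF L s1 s2 s3, of u] cnt_incl_excl[OF L s1 s2 s3, of w] e0 e1 e2 e3 by simp
    moreover have "cnt u (Lset P A i j) > 0" by (rule cnt_ge[OF vu vL])
    ultimately have "cnt w (Lset P A i j) > 0" by simp
    then obtain x where x: "x \<in> Poly_Mapping.keys w" "x \<in> Lset P A i j" using cnt_pos by blast
    show ?thesis
      using x wV keys_dvd_var[OF x(1), where 'k='k] uw by blast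
  qed
qed

end
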